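(* Let $f\in{\rm elh}(\mathbb{C})$. The following are equivalent: (1) $f\notin{\rm Aut}(\mathbb{C})$; (2) $R_f({\rm elh}(\mathbb{C}))\subset{\rm elh}(\mathbb{C})\setminus{\rm Aut}(\mathbb{C})$; (3) $L_f({\rm elh}(\mathbb{C}))\subset{\rm elh}(\mathbb{C})\setminus{\rm Aut}(\mathbb{C})$.
   Context: ${\rm elh}(\mathbb{C})$ denotes the set of entire functions with nowhere vanishing derivative and derivative $1$ at $0$. ${\rm Aut}(\mathbb{C})=\{z+a\,:\,a\in\mathbb{C}\}$. For $f\in{\rm elh}(\mathbb{C})$, $R_f(g)=g\circ f$ and $L_f(g)=f\circ g$ for $g\in{\rm elh}(\mathbb{C})$. *)

theory Defs
  imports "HOL-Complex_Analysis.Complex_Analysis"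
begin

definition elh :: "(complex \<Rightarrow> complex) set" where
  "elh = {f. f holomorphic_on UNIV \<and> (\<forall>z. deriv f z \<noteq> 0) \<and> deriv f 0 = 1}"

definition Aut :: "(complex \<Rightarrow> complex) set" where
  "Aut = {(\<lambda>z. z + a) | a. True}"

definition R_op :: "(complex \<Rightarrow> complex) \<Rightarrow> (complex \<Rightarrow> complex) \<Rightarrow> (complex \<Rightarrow> complex)" where
  "R_op f g = g \<circ> f"

definition L_op :: "(complex \<Rightarrow> complex) \<Rightarrow> (complex \<Rightarrow> complex) \<Rightarrow> (complex \<Rightarrow> complex)" where
  "L_op f g = f \<circ> g"

end

theory Submission
  imports Defs "HOL-Computational_Algebra.Fundamental_Theorem_Algebra"
begin

lemma proper_elh_Aut:
  assumes f: "f \<in> elh" and prp: "\<And>K. compact K \<Longrightarrow> compact {z. f z \<in> K}"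
  shows "f \<in> Aut"
proof -
  have holf: "f holomorphic_on UNIV" and dnz: "\<And>z. deriv f z \<noteq> 0" and d0: "deriv f 0 = 1"
    using f by (auto simp: elh_def)
  obtain c n where n: "0 < n" "c n \<noteq> 0" and feq: "f = (\<lambda>z. \<Sum>i\<le>n. c i * z^i)"
    using proper_map_polyfun_eq[OF holf] prp by blast
  define p where "p = (\<Sum>i\<le>n. monom (c i) i)"
  have pf: "poly p z = f z" for z
    by (simp add: p_def feq poly_sum poly_monom)
  have cp: "coeff p k = (if k \<le> n then c k else 0)" for k
    by (simp add: p_def coeff_sum)
  have degp: "degree p = n"
  proof (rule antisym)
    show "degree p \<le> n" unfolding p_def
      by (rule degree_sum_le) (auto intro: order_trans[OF degree_monom_le])
    show "n \<le> degree p" using cp[of n] n by (auto intro: le_degree)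
  qed
  have dp: "deriv f z = poly (pderiv p) z" for z
  proof -
    have "f = poly p" using pf by auto
    then show ?thesis by (simp add: DERIV_imp_deriv)
  qed
  have "constant (poly (pderiv p))"
    using fundamental_theorem_of_algebra dnz dp by metis
  then have "poly (pderiv p) = poly [:poly (pderiv p) 0:]"
    by (auto simp: constant_def fun_eq_iff)
  then have "pderiv p = [:poly (pderiv p) 0:]"
    using poly_eq_poly_eq_iff by blast
  then have "degree (pderiv p) = 0" by (metis degree_pCons_0)
  then have n1: "n = 1" using degp degree_pderiv[of p] n by simp
  have fz: "f z = c 0 + c 1 * z" for z
    using feq n1 by simp
  have "deriv f 0 = c 1"
  proof -
    have "((\<lambda>z. c 0 + c 1 * z) has_field_derivative c 1) (at 0)"
      by (auto intro!: derivative_eq_intros)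
    moreover have "f = (\<lambda>z. c 0 + c 1 * z)" using fz by auto
    ultimately show ?thesis by (simp add: DERIV_imp_deriv)
  qed
  then have "c 1 = 1" using d0 by simp
  then have "f = (\<lambda>z. z + c 0)" using fz by (auto simp: fun_eq_iff)
  then show ?thesis by (auto simp: Aut_def)
qed

lemma proper_from_left_inverse:
  fixes f g :: "complex \<Rightarrow> complex"
  assumes cf: "continuous_on UNIV f" and cg: "continuous_on UNIV g"
    and eq: "\<And>z. g (f z) = z + a" and K: "compact K"
  shows "compact {z. f z \<in> K}"
proof -
  have "compact ((\<lambda>w. g w - a) ` K)"
    by (rule compact_continuous_image[OF _ K])
       (auto intro!: continuous_intros continuous_on_subset[OF cg])
  moreover have "closed {z. f z \<in> K}"
    using continuous_closed_vimage[of K f] cf K compact_imp_closed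
    by (simp add: continuous_on_eq_continuous_within vimage_def compact_imp_closed)
  moreover have "{z. f z \<in> K} \<subseteq> (\<lambda>w. g w - a) ` K"
  proof
    fix z assume "z \<in> {z. f z \<in> K}"
    then have "f z \<in> K" by simp
    moreover have "z = g (f z) - a" using eq[of z] by simp
    ultimately show "z \<in> (\<lambda>w. g w - a) ` K" by blast
  qed
  ultimately show ?thesis
    by (metis compact_Int_closed inf.absorb_iff2)
qed

lemma elh_cont: "f \<in> elh \<Longrightarrow> continuous_on UNIV f"
  by (auto simp: elh_def intro: holomorphic_on_imp_continuous_on)

lemma id_elh: "(\<lambda>z. z) \<in> elh"
  by (auto simp: elh_def)

theorem proposition3p11:
  assumes "f \<in> elh"
  shows "(f \<notin> Aut \<longleftrightarrow> (\<forall>g\<in>elh. R_op f g \<notin> Aut))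
       \<and> (f \<notin> Aut \<longleftrightarrow> (\<forall>g\<in>elh. L_op f g \<notin> Aut))"
proof -
  have R: "f \<in> Aut" if g: "g \<in> elh" and h: "R_op f g \<in> Aut" for g
  proof -
    obtain a where a: "g \<circ> f = (\<lambda>z. z + a)" using h by (auto simp: Aut_def R_op_def)
    have eq: "g (f z) = z + a" for z using fun_cong[OF a, of z] by simp
    show ?thesis
      by (rule proper_elh_Aut[OF assms proper_from_left_inverse[OF elh_cont[OF assms] elh_cont[OF g] eq]])
  qed
  have L: "f \<in> Aut" if g: "g \<in> elh" and h: "L_op f g \<in> Aut" for g
  proof -
    obtain a where a: "f \<circ> g = (\<lambda>z. z + a)" using h by (auto simp: Aut_def L_op_def)
    have eq: "f (g z) = z + a" for z using fun_cong[OF a, of z] by simp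
    have "g \<in> Aut"
      by (rule proper_elh_Aut[OF g proper_from_left_inverse[OF elh_cont[OF g] elh_cont[OF assms] eq]])
    then obtain b where b: "g = (\<lambda>z. z + b)" by (auto simp: Aut_def)
    have "f w = w + (a - b)" for w using eq[of "w - b"] b by simp
    then have "f = (\<lambda>w. w + (a - b))" by auto
    then show ?thesis by (auto simp: Aut_def)
  qed
  have R2: "R_op f (\<lambda>z. z) = f" "L_op f (\<lambda>z. z) = f"
    by (auto simp: R_op_def L_op_def)
  show ?thesis using R L R2 id_elh by metis
qed

end
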